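(* Let $n\geq 4$ be even, $N=n/2$, and let $\mathcal{D}\leq\mathbb{F}_2^n$ be a semi self-dual code that is not doubly-even. Let $A(x,y)=\sum_{c\in\mathcal{D}}x^{n-\mathrm{wt}(c)}y^{\mathrm{wt}(c)}$, $D(x,y)=A\big(\tfrac{x+y}{\sqrt2},\tfrac{x-y}{\sqrt2}\big)$ and $B(x,y)=A(x,y)-D(x,y)$. Then there are unique complex numbers $e_0,\dots,e_{\lfloor (N-2)/4\rfloor}$ with $$B(x,y)=(x^4-6x^2y^2+y^4)\sum_{i=0}^{\lfloor (N-2)/4\rfloor}e_i\,(x^2+y^2)^{N-2-4i}\big(x^2y^2(x^2-y^2)^2\big)^i,$$ and for every $i$ the number $\epsilon_i:=(-1)^i2^{N-1-6i}e_i$ is a non-negative integer.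
   Context: A binary linear code $\mathcal{D}\leq\mathbb{F}_2^n$ is called semi self-dual if $\mathcal{D}\subseteq\mathcal{D}^\perp$ (standard inner product), the all-ones vector lies in $\mathcal{D}$, and $\dim(\mathcal{D}^\perp/\mathcal{D})=2$. $\mathcal{D}$ is doubly-even if every codeword has weight divisible by $4$; $\mathrm{wt}(c)$ is the Hamming weight. *)

theory Defs
  imports Complex_Main
begin

text \<open>Vectors of F_2^n are represented by their supports, i.e. subsets of {..<n}.
  Addition is symmetric difference, weight is cardinality, and the standard
  inner product of u and v is the parity of card (u \<inter> v).\<close>

definition binary_linear_code :: "nat \<Rightarrow> nat set set \<Rightarrow> bool" where
  "binary_linear_code n C \<longleftrightarrow> C \<subseteq> Pow {..<n} \<and> {} \<in> C \<and>
     (\<forall>a\<in>C. \<forall>b\<in>C. (a - b) \<union> (b - a) \<in> C)"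

definition dual_code :: "nat \<Rightarrow> nat set set \<Rightarrow> nat set set" where
  "dual_code n C = {v. v \<subseteq> {..<n} \<and> (\<forall>c\<in>C. even (card (v \<inter> c)))}"

text \<open>dim(D^perp / D) = 2 over F_2 means |D^perp| = 4 |D| (given D \<subseteq> D^perp).\<close>
definition semi_self_dual :: "nat \<Rightarrow> nat set set \<Rightarrow> bool" where
  "semi_self_dual n C \<longleftrightarrow> binary_linear_code n C \<and> C \<subseteq> dual_code n C \<and>
     {..<n} \<in> C \<and> card (dual_code n C) = 4 * card C"

definition doubly_even :: "nat set set \<Rightarrow> bool" where
  "doubly_even C \<longleftrightarrow> (\<forall>c\<in>C. 4 dvd card c)"

definition weight_enum :: "nat \<Rightarrow> nat set set \<Rightarrow> complex \<Rightarrow> complex \<Rightarrow> complex" where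
  "weight_enum n C x y = (\<Sum>c\<in>C. x ^ (n - card c) * y ^ card c)"

end

theory Submission
  imports Defs
begin


fun HK :: "nat \<Rightarrow> complex \<Rightarrow> complex \<Rightarrow> complex \<times> complex" where
  "HK 0 r t = (1, 1)"
| "HK (Suc l) r t = (let hk = HK l r t; h' = r * fst hk + t * snd hk in (h', r * snd hk + h'))"

definition good :: "nat \<Rightarrow> (complex \<Rightarrow> complex \<Rightarrow> complex) \<Rightarrow> bool" where
  "good l F \<longleftrightarrow> (\<exists>h::nat\<Rightarrow>nat. (\<forall>i>l. h i = 0) \<and>
      (\<forall>r t. F r t = (\<Sum>i\<le>l. of_nat (h i) * r ^ (l - i) * t ^ i)))"

lemma good_r: assumes "good l F" shows "good (Suc l) (\<lambda>r t. r * F r t)"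
proof -
  obtain h where h: "\<forall>i>l. h i = 0" "\<forall>r t. F r t = (\<Sum>i\<le>l. of_nat (h i) * r ^ (l - i) * t ^ i)"
    using assms unfolding good_def by blast
  show ?thesis unfolding good_def
  proof (intro exI conjI allI impI)
    show "h i = 0" if "i > Suc l" for i using h that by auto
    fix r t
    have "r * F r t = (\<Sum>i\<le>l. of_nat (h i) * r ^ (Suc l - i) * t ^ i)"
      unfolding h(2)[rule_format] sum_distrib_left
      by (rule sum.cong) (auto simp: Suc_diff_le)
    also have "\<dots> = (\<Sum>i\<le>Suc l. of_nat (h i) * r ^ (Suc l - i) * t ^ i)"
      using h(1) by simp
    finally show "r * F r t = (\<Sum>i\<le>Suc l. of_nat (h i) * r ^ (Suc l - i) * t ^ i)" .
  qed
qed

lemma good_t: assumes "good l F" shows "good (Suc l) (\<lambda>r t. t * F r t)"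
proof -
  obtain h where h: "\<forall>i>l. h i = 0" "\<forall>r t. F r t = (\<Sum>i\<le>l. of_nat (h i) * r ^ (l - i) * t ^ i)"
    using assms unfolding good_def by blast
  define h' where "h' i = (case i of 0 \<Rightarrow> 0 | Suc j \<Rightarrow> h j)" for i
  show ?thesis unfolding good_def
  proof (intro exI conjI allI impI)
    show "h' i = 0" if "i > Suc l" for i using h that by (auto simp: h'_def split: nat.split)
    fix r t
    have "t * F r t = (\<Sum>i\<le>l. of_nat (h i) * r ^ (l - i) * t ^ Suc i)"
      unfolding h(2)[rule_format] sum_distrib_left
      by (rule sum.cong) auto
    also have "\<dots> = (\<Sum>i\<le>Suc l. of_nat (h' i) * r ^ (Suc l - i) * t ^ i)"
      unfolding sum.atMost_Suc_shift by (simp add: h'_def)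
    finally show "t * F r t = (\<Sum>i\<le>Suc l. of_nat (h' i) * r ^ (Suc l - i) * t ^ i)" .
  qed
qed

lemma good_add: assumes "good l F" "good l G" shows "good l (\<lambda>r t. F r t + G r t)"
proof -
  obtain h where h: "\<forall>i>l. h i = 0" "\<forall>r t. F r t = (\<Sum>i\<le>l. of_nat (h i) * r ^ (l - i) * t ^ i)"
    using assms unfolding good_def by blast
  obtain g where g: "\<forall>i>l. g i = 0" "\<forall>r t. G r t = (\<Sum>i\<le>l. of_nat (g i) * r ^ (l - i) * t ^ i)"
    using assms unfolding good_def by blast
  show ?thesis unfolding good_def
  proof (intro exI[of _ "\<lambda>i. h i + g i"] conjI allI impI)
    show "h i + g i = 0" if "i > l" for i using h g that by auto
    fix r t
    show "F r t + G r t = (\<Sum>i\<le>l. of_nat (h i + g i) * r ^ (l - i) * t ^ i)"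
      unfolding h(2)[rule_format] g(2)[rule_format] sum.distrib[symmetric] by (rule sum.cong) (auto simp: algebra_simps)
  qed
qed

lemma good_HK: "good l (\<lambda>r t. fst (HK l r t)) \<and> good l (\<lambda>r t. snd (HK l r t))"
proof (induction l)
  case 0
  show ?case unfolding good_def by (auto intro!: exI[of _ "\<lambda>i. if i = 0 then 1 else 0"])
next
  case (Suc l)
  have 1: "good (Suc l) (\<lambda>r t. fst (HK (Suc l) r t))"
    using good_add[OF good_r[OF Suc[THEN conjunct1]] good_t[OF Suc[THEN conjunct2]]]
    by (simp add: Let_def)
  have 2: "good (Suc l) (\<lambda>r t. snd (HK (Suc l) r t))"
    using good_add[OF good_r[OF Suc[THEN conjunct2]] 1]
    by (simp add: Let_def)
  show ?case using 1 2 by blast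
qed

lemma HK_id: "(x + y) * fst (HK l (x*y) ((x-y)^2)) = x^(2*l+1) + y^(2*l+1) \<and>
   (x + y) * (x - y) * snd (HK l (x*y) ((x-y)^2)) = x^(2*l+2) - y^(2*l+2)"
proof (induction l)
  case 0 then show ?case by (simp add: algebra_simps power2_eq_square)
next
  case (Suc l)
  let ?h = "fst (HK l (x*y) ((x-y)^2))" and ?k = "snd (HK l (x*y) ((x-y)^2))"
  have e1: "(x + y) * ?h = x^(2*l+1) + y^(2*l+1)" and e2: "(x + y) * (x - y) * ?k = x^(2*l+2) - y^(2*l+2)"
    using Suc by auto
  have h1: "(x+y) * fst (HK (Suc l) (x*y) ((x-y)^2)) = x*y*((x + y) * ?h) + (x-y)*((x + y) * (x - y) * ?k)"
    by (simp add: Let_def algebra_simps power2_eq_square)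
  have A: "(x+y) * fst (HK (Suc l) (x*y) ((x-y)^2)) = x^(2*Suc l+1) + y^(2*Suc l+1)"
    unfolding h1 e1 e2 by (simp add: algebra_simps)
  have h2: "(x+y)*(x-y) * snd (HK (Suc l) (x*y) ((x-y)^2)) = x*y*((x + y) * (x - y) * ?k) + (x-y)*((x+y) * fst (HK (Suc l) (x*y) ((x-y)^2)))"
    by (simp add: Let_def algebra_simps power2_eq_square)
  have B: "(x+y)*(x-y) * snd (HK (Suc l) (x*y) ((x-y)^2)) = x^(2*Suc l+2) - y^(2*Suc l+2)"
    unfolding h2 A e2 by (simp add: algebra_simps)
  show ?case using A B by blast
qed



lemma expand:
  fixes a b u w s1 s0 :: complex
  assumes "finite I" "c \<subseteq> I"
  shows "(\<Prod>j\<in>I. if j \<in> c then w * (a + s1 * b) else u * (a + s0 * b)) =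
    u^(card I - card c) * w^card c *
    (\<Sum>v\<in>Pow I. a^(card I - card v) * b^(card v) * s1^(card (v\<inter>c)) * s0^(card (v - c)))"
proof -
  have "(\<Prod>j\<in>I. if j \<in> c then w * (a + s1 * b) else u * (a + s0 * b)) =
     (\<Prod>j\<in>I. (if j \<in> c then w else u) * ((if j \<in> c then s1 else s0) * b + a))"
    by (rule prod.cong) (auto simp: algebra_simps)
  also have "\<dots> = (\<Prod>j\<in>I. (if j \<in> c then w else u)) * (\<Prod>j\<in>I. (if j \<in> c then s1 else s0) * b + a)"
    by (rule prod.distrib)
  also have "(\<Prod>j\<in>I. (if j \<in> c then w else u)) = w ^ card c * u ^ (card I - card c)"
    using assms by (simp add: prod.If_cases Int_absorb1 card_Diff_subset finite_subset Diff_eq[symmetric])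
  also have "(\<Prod>j\<in>I. (if j \<in> c then s1 else s0) * b + a) =
      (\<Sum>v\<in>Pow I. (\<Prod>j\<in>v. (if j \<in> c then s1 else s0) * b) * (\<Prod>j\<in>I - v. a))"
    by (rule prod_add[OF assms(1)])
  also have "\<dots> = (\<Sum>v\<in>Pow I. a^(card I - card v) * b^(card v) * s1^(card (v\<inter>c)) * s0^(card (v - c)))"
  proof (rule sum.cong)
    fix v assume v: "v \<in> Pow I"
    hence fv: "finite v" using assms finite_subset by auto
    have "(\<Prod>j\<in>v. (if j \<in> c then s1 else s0) * b) = (\<Prod>j\<in>v. (if j \<in> c then s1 else s0)) * b ^ card v"
      by (simp add: prod.distrib)
    also have "(\<Prod>j\<in>v. (if j \<in> c then s1 else s0)) = s1^(card (v\<inter>c)) * s0^(card (v - c))"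
      using fv by (simp add: prod.If_cases Diff_eq[symmetric])
    finally show "(\<Prod>j\<in>v. (if j \<in> c then s1 else s0) * b) * (\<Prod>j\<in>I - v. a) =
        a^(card I - card v) * b^(card v) * s1^(card (v\<inter>c)) * s0^(card (v - c))"
      using v assms by (simp add: card_Diff_subset fv)
  qed simp
  finally show ?thesis by (simp add: algebra_simps)
qed

lemma term_prod:
  fixes x y :: complex
  assumes "c \<subseteq> {..<n}"
  shows "x ^ (n - card c) * y ^ card c = (\<Prod>j\<in>{..<n}. if j \<in> c then y else x)"
  using assms by (simp add: prod.If_cases Int_absorb1 card_Diff_subset finite_subset Diff_eq[symmetric])

lemma card_symdiff:
  assumes "finite c" "finite d"
  shows "card ((c - d) \<union> (d - c)) + 2 * card (c \<inter> d) = card c + card d"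
proof -
  have "card c = card (c - d) + card (c \<inter> d)"
    using assms by (metis Diff_Diff_Int Diff_subset card_Diff_subset_Int finite_Int inf_commute card_Diff_subset Int_lower1 le_add_diff_inverse2 card_mono inf.cobounded1 add.commute)
  moreover have "card d = card (d - c) + card (c \<inter> d)"
    using assms by (metis Diff_Diff_Int Diff_subset card_Diff_subset_Int finite_Int inf_commute card_Diff_subset Int_lower1 le_add_diff_inverse2 card_mono inf.cobounded1 add.commute)
  moreover have "card ((c - d) \<union> (d - c)) = card (c - d) + card (d - c)"
    using assms by (intro card_Un_disjoint) auto
  ultimately show ?thesis by simp
qed

lemma char_sum:
  fixes \<phi> :: "nat set \<Rightarrow> complex"
  assumes fin: "finite C" and cl: "\<forall>c\<in>C. \<forall>d\<in>C. (c - d) \<union> (d - c) \<in> C"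
    and mult: "\<And>c d. c \<in> C \<Longrightarrow> d \<in> C \<Longrightarrow> \<phi> ((c - d) \<union> (d - c)) = \<phi> c * \<phi> d"
  shows "(\<Sum>c\<in>C. \<phi> c) = (if \<forall>c\<in>C. \<phi> c = 1 then of_nat (card C) else 0)"
proof (cases "\<forall>c\<in>C. \<phi> c = 1")
  case True then show ?thesis by simp
next
  case False
  then obtain d where d: "d \<in> C" "\<phi> d \<noteq> 1" by auto
  let ?g = "\<lambda>c. (c - d) \<union> (d - c)"
  have inv: "?g (?g c) = c" for c by auto
  have bij: "bij_betw ?g C C"
    by (rule bij_betw_byWitness[where f'="?g"]) (use cl d in \<open>auto simp: inv\<close>)
  have "(\<Sum>c\<in>C. \<phi> c) = (\<Sum>c\<in>C. \<phi> (?g c))"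
    using sum.reindex_bij_betw[OF bij, of \<phi>] by simp
  also have "\<dots> = (\<Sum>c\<in>C. \<phi> c * \<phi> d)"
    by (rule sum.cong) (use mult d in auto)
  also have "\<dots> = \<phi> d * (\<Sum>c\<in>C. \<phi> c)" by (simp add: sum_distrib_left algebra_simps)
  finally have "(1 - \<phi> d) * (\<Sum>c\<in>C. \<phi> c) = 0" by (simp add: algebra_simps)
  then show ?thesis using d False by auto
qed



lemma sum_neg1_pow:
  assumes "finite I" "c \<subseteq> I"
  shows "(\<Sum>v\<in>Pow I. (-1::complex)^(card (v \<inter> c))) = (if c = {} then 2^card I else 0)"
proof -
  have "(\<Prod>j\<in>I. if j \<in> c then 1 * (1 + (-1) * 1) else 1 * (1 + 1 * (1::complex))) =
      1^(card I - card c) * 1^card c *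
      (\<Sum>v\<in>Pow I. 1^(card I - card v) * 1^(card v) * (-1)^(card (v\<inter>c)) * 1^(card (v - c)))"
    by (rule expand[OF assms])
  moreover have "(\<Prod>j\<in>I. if j \<in> c then 1 * (1 + (-1) * 1) else 1 * (1 + 1 * (1::complex))) = (\<Prod>j\<in>I. if j \<in> c then 0 else 2)"
    by (rule prod.cong) auto
  ultimately have e: "(\<Sum>v\<in>Pow I. (-1::complex)^(card (v \<inter> c))) = (\<Prod>j\<in>I. if j \<in> c then 0 else 2)"
    by simp
  show ?thesis
  proof (cases "c = {}")
    case True then show ?thesis using e by simp
  next
    case False
    then obtain j where "j \<in> c" by auto
    hence "(\<Prod>j\<in>I. if j \<in> c then 0 else (2::complex)) = 0"
      using assms by (subst prod_zero_iff) auto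
    then show ?thesis using e False by simp
  qed
qed

lemma neg1_mult:
  assumes "finite c" "finite d"
  shows "(-1::complex)^(card (v \<inter> ((c - d) \<union> (d - c)))) = (-1)^card (v \<inter> c) * (-1)^card (v \<inter> d)"
proof -
  have eq: "v \<inter> ((c - d) \<union> (d - c)) = ((v\<inter>c) - (v\<inter>d)) \<union> ((v\<inter>d) - (v\<inter>c))" by auto
  have "card (v \<inter> ((c - d) \<union> (d - c))) + 2 * card ((v\<inter>c) \<inter> (v\<inter>d)) = card (v\<inter>c) + card (v\<inter>d)"
    unfolding eq by (rule card_symdiff) (use assms in auto)
  hence "(-1::complex)^(card (v \<inter> ((c - d) \<union> (d - c))) + 2 * card ((v\<inter>c) \<inter> (v\<inter>d))) = (-1)^card (v \<inter> c) * (-1)^card (v \<inter> d)"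
    by (simp add: power_add)
  thus ?thesis by (simp add: power_add power_mult)
qed

lemma ii_mult:
  assumes "finite c" "finite d" "even (card (c \<inter> d))"
  shows "\<i>^(card ((c - d) \<union> (d - c))) = \<i>^card c * \<i>^card d"
proof -
  have "card ((c - d) \<union> (d - c)) + 2 * card (c \<inter> d) = card c + card d"
    by (rule card_symdiff) (use assms in auto)
  hence "\<i>^(card ((c - d) \<union> (d - c)) + 2 * card (c \<inter> d)) = \<i>^card c * \<i>^card d"
    by (simp add: power_add)
  moreover obtain k where "card (c \<inter> d) = 2 * k" using assms by auto
  ultimately show ?thesis by (simp add: power_add power_mult)
qed

lemma card_code:
  assumes "even n" "semi_self_dual n C"
  shows "card C = 2^(n div 2 - 1)" "finite C"
proof -
  let ?I = "{..<n::nat}"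
  have bl: "binary_linear_code n C" and sd: "card (dual_code n C) = 4 * card C"
    using assms unfolding semi_self_dual_def by auto
  have CI: "C \<subseteq> Pow ?I" and e: "{} \<in> C" and cl: "\<forall>a\<in>C. \<forall>b\<in>C. (a - b) \<union> (b - a) \<in> C"
    using bl unfolding binary_linear_code_def by auto
  show fC: "finite C" using CI finite_subset by blast
  have fin_c: "c \<in> C \<Longrightarrow> finite c" for c using CI finite_subset by blast
  have chi: "(\<Sum>c\<in>C. (-1::complex)^card (v \<inter> c)) = (if v \<in> dual_code n C then of_nat (card C) else 0)"
    if v: "v \<subseteq> ?I" for v
  proof -
    have "(\<Sum>c\<in>C. (-1::complex)^card (v \<inter> c)) = (if \<forall>c\<in>C. (-1::complex)^card (v \<inter> c) = 1 then of_nat (card C) else 0)"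
      by (rule char_sum[OF fC cl]) (use neg1_mult fin_c in auto)
    moreover have "(\<forall>c\<in>C. (-1::complex)^card (v \<inter> c) = 1) \<longleftrightarrow> v \<in> dual_code n C"
      using v unfolding dual_code_def by (auto simp: minus_one_power_iff)
    ultimately show ?thesis by simp
  qed
  have dsub: "dual_code n C \<subseteq> Pow ?I" unfolding dual_code_def by auto
  have "(\<Sum>v\<in>Pow ?I. \<Sum>c\<in>C. (-1::complex)^card (v \<inter> c)) = (\<Sum>v\<in>Pow ?I. (if v \<in> dual_code n C then of_nat (card C) else 0))"
    by (rule sum.cong) (use chi in auto)
  also have "\<dots> = of_nat (card C) * of_nat (card (dual_code n C))"
    by (simp add: sum.If_cases Int_absorb1[OF dsub])
  finally have s1: "(\<Sum>v\<in>Pow ?I. \<Sum>c\<in>C. (-1::complex)^card (v \<inter> c)) = of_nat (card C * card (dual_code n C))" by simp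
  have "(\<Sum>v\<in>Pow ?I. \<Sum>c\<in>C. (-1::complex)^card (v \<inter> c)) = (\<Sum>c\<in>C. \<Sum>v\<in>Pow ?I. (-1::complex)^card (v \<inter> c))"
    by (rule sum.swap)
  also have "\<dots> = (\<Sum>c\<in>C. if c = {} then 2^n else 0)"
  proof (rule sum.cong)
    fix c assume "c \<in> C"
    hence "c \<subseteq> ?I" using CI by auto
    from sum_neg1_pow[OF _ this] show "(\<Sum>v\<in>Pow ?I. (-1::complex)^card (v \<inter> c)) = (if c = {} then 2^n else 0)"
      by simp
  qed simp
  also have "\<dots> = 2^n" using e fC by (simp add: sum.delta)
  finally have "card C * card (dual_code n C) = 2^n"
    using s1 by (metis of_nat_eq_iff of_nat_numeral of_nat_power)
  moreover have "(2::nat)^n = 2^(n div 2) * 2^(n div 2)"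
    using assms(1) by (metis dvd_mult_div_cancel mult_2 power_add)
  ultimately have "(2 * card C)^2 = (2^(n div 2))^2"
    using sd by (simp add: power2_eq_square algebra_simps)
  hence "2 * card C = 2^(n div 2)" by (rule power_eq_imp_eq_base) auto
  moreover have "n div 2 \<ge> 1"
  proof (rule ccontr)
    assume "\<not> n div 2 \<ge> 1"
    hence "n div 2 = 0" by simp
    thus False using \<open>2 * card C = 2^(n div 2)\<close> by simp
  qed
  ultimately show "card C = 2^(n div 2 - 1)"
    by (metis Suc_diff_1 less_le_trans mult_cancel_left1 not_one_le_zero power_Suc zero_less_one mult_left_cancel zero_neq_numeral)
qed



lemma s_sq: "complex_of_real (sqrt 2) * complex_of_real (sqrt 2) = 2"
  by (simp flip: of_real_mult)

lemma card_Int_Diff': "finite v \<Longrightarrow> card (v \<inter> c) + card (v - c) = card v"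
proof -
  assume f: "finite v"
  have "card ((v \<inter> c) \<union> (v - c)) = card (v \<inter> c) + card (v - c)"
    by (rule card_Un_disjoint) (use f in auto)
  moreover have "(v \<inter> c) \<union> (v - c) = v" by auto
  ultimately show ?thesis by simp
qed

lemma WL:
  fixes a b :: complex
  assumes CI: "C \<subseteq> Pow {..<n}" and fC: "finite C" and n: "n = 2 * N"
  defines "s \<equiv> complex_of_real (sqrt 2)"
  shows "weight_enum n C ((a+b)/s) (\<i>*(a-b)/s) =
     (1/2^N) * (\<Sum>v\<in>Pow {..<n}. a^(n - card v) * b^card v * (\<Sum>c\<in>C. \<i>^card c * (-1)^card (v \<inter> c)))"
proof -
  have ss: "s * s = 2" unfolding s_def by (rule s_sq)
  have sn: "s ^ n = 2 ^ N" unfolding n power_mult by (simp add: power2_eq_square ss)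
  have s0: "s \<noteq> 0" using ss by auto
  have tm: "((a+b)/s)^(n - card c) * (\<i>*(a-b)/s)^card c =
     \<i>^card c / 2^N * (\<Sum>v\<in>Pow {..<n}. a^(n - card v) * b^card v * (-1)^card (v \<inter> c))"
    if c: "c \<in> C" for c
  proof -
    have cI: "c \<subseteq> {..<n}" using c CI by auto
    have "((a+b)/s)^(n - card c) * (\<i>*(a-b)/s)^card c =
        (\<Prod>j\<in>{..<n}. if j \<in> c then (\<i>/s) * (a + (-1) * b) else (1/s) * (a + 1 * b))"
      unfolding term_prod[OF cI] by (rule prod.cong) auto
    also have "\<dots> = (1/s)^(card {..<n} - card c) * (\<i>/s)^card c *
      (\<Sum>v\<in>Pow {..<n}. a^(card {..<n} - card v) * b^(card v) * (-1)^(card (v\<inter>c)) * 1^(card (v - c)))"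
      by (rule expand) (use cI in auto)
    also have "(1/s)^(card {..<n} - card c) * (\<i>/s)^card c = \<i>^card c / s^n"
    proof -
      have "card c \<le> n" using cI by (metis card_lessThan card_mono finite_lessThan)
      hence "s^n = s^(n - card c) * s^card c" by (metis le_add_diff_inverse2 power_add)
      thus ?thesis by (simp add: power_divide s0)
    qed
    finally show ?thesis by (simp add: sn)
  qed
  have "weight_enum n C ((a+b)/s) (\<i>*(a-b)/s) =
     (\<Sum>c\<in>C. \<i>^card c / 2^N * (\<Sum>v\<in>Pow {..<n}. a^(n - card v) * b^card v * (-1)^card (v \<inter> c)))"
    unfolding weight_enum_def by (rule sum.cong) (use tm in auto)
  also have "\<dots> = (\<Sum>c\<in>C. \<Sum>v\<in>Pow {..<n}. (1/2^N) * (a^(n - card v) * b^card v * (\<i>^card c * (-1)^card (v \<inter> c))))"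
    by (simp add: sum_distrib_left mult_ac)
  also have "\<dots> = (\<Sum>v\<in>Pow {..<n}. \<Sum>c\<in>C. (1/2^N) * (a^(n - card v) * b^card v * (\<i>^card c * (-1)^card (v \<inter> c))))"
    by (rule sum.swap)
  also have "\<dots> = (1/2^N) * (\<Sum>v\<in>Pow {..<n}. a^(n - card v) * b^card v * (\<Sum>c\<in>C. \<i>^card c * (-1)^card (v \<inter> c)))"
    by (simp add: sum_distrib_left)
  finally show ?thesis .
qed

lemma WTL:
  fixes a b :: complex
  assumes CI: "C \<subseteq> Pow {..<n}" and fC: "finite C" and n: "n = 2 * N"
    and ev: "\<And>c. c \<in> C \<Longrightarrow> even (card c)"
  defines "s \<equiv> complex_of_real (sqrt 2)"
  shows "weight_enum n C (((a+b)/s + \<i>*(a-b)/s)/s) (((a+b)/s - \<i>*(a-b)/s)/s) =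
     (\<i>^N/2^N) * (\<Sum>v\<in>Pow {..<n}. a^(n - card v) * b^card v * (-\<i>)^card v * (\<Sum>c\<in>C. \<i>^card c * (-1)^card (v \<inter> c)))"
proof -
  have ss: "s * s = 2" unfolding s_def by (rule s_sq)
  have s0: "s \<noteq> 0" using ss by auto
  have x1: "((a+b)/s + \<i>*(a-b)/s)/s = ((1+\<i>)/2) * (a + (-\<i>) * b)"
  proof -
    have "((a+b)/s + \<i>*(a-b)/s)/s = ((a+b) + \<i>*(a-b))/(s*s)" using s0 by (simp add: add_divide_distrib)
    also have "\<dots> = ((1+\<i>)/2) * (a + (-\<i>) * b)" unfolding ss by (simp add: algebra_simps)
    finally show ?thesis .
  qed
  have y1: "((a+b)/s - \<i>*(a-b)/s)/s = ((1-\<i>)/2) * (a + \<i> * b)"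
  proof -
    have "((a+b)/s - \<i>*(a-b)/s)/s = ((a+b) - \<i>*(a-b))/(s*s)" using s0 by (simp add: diff_divide_distrib)
    also have "\<dots> = ((1-\<i>)/2) * (a + \<i> * b)" unfolding ss by (simp add: algebra_simps)
    finally show ?thesis .
  qed
  have tm: "(((1+\<i>)/2) * (a + (-\<i>) * b))^(n - card c) * (((1-\<i>)/2) * (a + \<i> * b))^card c =
     \<i>^N * \<i>^card c / 2^N * (\<Sum>v\<in>Pow {..<n}. a^(n - card v) * b^card v * (-\<i>)^card v * (-1)^card (v \<inter> c))"
    if c: "c \<in> C" for c
  proof -
    have cI: "c \<subseteq> {..<n}" using c CI by auto
    obtain k where k: "card c = 2 * k" using ev[OF c] by auto
    have kN: "k \<le> N" using cI k n by (metis card_lessThan card_mono finite_lessThan mult_le_cancel1 zero_less_numeral)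
    have "(((1+\<i>)/2) * (a + (-\<i>) * b))^(n - card c) * (((1-\<i>)/2) * (a + \<i> * b))^card c =
        (\<Prod>j\<in>{..<n}. if j \<in> c then ((1-\<i>)/2) * (a + \<i> * b) else ((1+\<i>)/2) * (a + (-\<i>) * b))"
      unfolding term_prod[OF cI] by simp
    also have "\<dots> = ((1+\<i>)/2)^(card {..<n} - card c) * ((1-\<i>)/2)^card c *
      (\<Sum>v\<in>Pow {..<n}. a^(card {..<n} - card v) * b^(card v) * \<i>^(card (v\<inter>c)) * (-\<i>)^(card (v - c)))"
      by (rule expand) (use cI in auto)
    also have "((1+\<i>)/2)^(card {..<n} - card c) * ((1-\<i>)/2)^card c = \<i>^N * \<i>^card c / 2^N"
    proof -
      have q1: "((1+\<i>)/2)^2 = \<i>/2" by (simp add: power2_eq_square field_simps)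
      have q2: "((1-\<i>)/2)^2 = -\<i>/2" by (simp add: power2_eq_square field_simps)
      have "card {..<n} - card c = 2 * (N - k)" using k n by simp
      hence "((1+\<i>)/2)^(card {..<n} - card c) = (\<i>/2)^(N - k)"
        by (simp only: power_mult q1)
      moreover have "((1-\<i>)/2)^card c = (-\<i>/2)^k"
        unfolding k by (simp only: power_mult q2)
      moreover have "(\<i>/2)^(N - k) * (-\<i>/2)^k = \<i>^N * \<i>^card c / 2^N"
      proof -
        have m1: "(-\<i>/2)^k = (-1)^k * (\<i>/2)^k"
          by (metis mult_minus1 minus_divide_left power_mult_distrib)
        have m2: "(\<i>/2)^(N - k) * (\<i>/2)^k = \<i>^N / 2^N"
          using kN by (metis le_add_diff_inverse2 power_add power_divide)
        have m3: "\<i>^card c = (-1)^k"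
          unfolding k power_mult by simp
        have "(\<i>/2)^(N - k) * (-\<i>/2)^k = (-1)^k * ((\<i>/2)^(N - k) * (\<i>/2)^k)"
          unfolding m1 by (simp only: ac_simps)
        also have "\<dots> = \<i>^N * \<i>^card c / 2^N" unfolding m2 m3 by simp
        finally show ?thesis .
      qed
      ultimately show ?thesis by simp
    qed
    also have "(\<Sum>v\<in>Pow {..<n}. a^(card {..<n} - card v) * b^(card v) * \<i>^(card (v\<inter>c)) * (-\<i>)^(card (v - c)))
       = (\<Sum>v\<in>Pow {..<n}. a^(n - card v) * b^card v * (-\<i>)^card v * (-1)^card (v \<inter> c))"
    proof (rule sum.cong)
      fix v assume "v \<in> Pow {..<n}"
      hence fv: "finite v" using finite_subset by auto
      have ii: "\<i> = (-\<i>) * (-1::complex)" by simp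
      have "\<i>^(card (v\<inter>c)) * (-\<i>)^(card (v - c)) = (-\<i>)^(card (v\<inter>c)) * (-1)^(card (v\<inter>c)) * (-\<i>)^(card (v - c))"
      proof -
        have "\<i>^(card (v\<inter>c)) = (-\<i>)^(card (v\<inter>c)) * (-1)^(card (v\<inter>c))"
          by (metis ii power_mult_distrib)
        thus ?thesis by (simp only:)
      qed
      also have "\<dots> = (-\<i>)^card v * (-1)^card (v \<inter> c)"
      proof -
        have "(-\<i>)^(card (v\<inter>c)) * (-\<i>)^(card (v - c)) = (-\<i>::complex)^card v"
          using card_Int_Diff'[OF fv, of c] by (metis power_add)
        thus ?thesis by (metis mult.commute mult.left_commute)
      qed
      finally have Fi: "\<i>^(card (v\<inter>c)) * (-\<i>)^(card (v - c)) = (-\<i>)^card v * (-1)^card (v \<inter> c)" .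
      show "a^(card {..<n} - card v) * b^(card v) * \<i>^(card (v\<inter>c)) * (-\<i>)^(card (v - c)) =
          a^(n - card v) * b^card v * (-\<i>)^card v * (-1)^card (v \<inter> c)"
        by (simp only: card_lessThan mult.assoc Fi)
    qed simp
    finally show ?thesis by simp
  qed
  have "weight_enum n C (((a+b)/s + \<i>*(a-b)/s)/s) (((a+b)/s - \<i>*(a-b)/s)/s) =
     (\<Sum>c\<in>C. \<i>^N * \<i>^card c / 2^N * (\<Sum>v\<in>Pow {..<n}. a^(n - card v) * b^card v * (-\<i>)^card v * (-1)^card (v \<inter> c)))"
    unfolding weight_enum_def x1 y1 by (rule sum.cong) (use tm in auto)
  also have "\<dots> = (\<Sum>c\<in>C. \<Sum>v\<in>Pow {..<n}. (\<i>^N/2^N) * (a^(n - card v) * b^card v * (-\<i>)^card v * (\<i>^card c * (-1)^card (v \<inter> c))))"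
    by (simp add: sum_distrib_left mult_ac)
  also have "\<dots> = (\<Sum>v\<in>Pow {..<n}. \<Sum>c\<in>C. (\<i>^N/2^N) * (a^(n - card v) * b^card v * (-\<i>)^card v * (\<i>^card c * (-1)^card (v \<inter> c))))"
    by (rule sum.swap)
  also have "\<dots> = (\<i>^N/2^N) * (\<Sum>v\<in>Pow {..<n}. a^(n - card v) * b^card v * (-\<i>)^card v * (\<Sum>c\<in>C. \<i>^card c * (-1)^card (v \<inter> c)))"
    by (simp add: sum_distrib_left)
  finally show ?thesis .
qed



lemma chi_eval:
  fixes n :: nat
  assumes fC: "finite C" and CI: "C \<subseteq> Pow {..<n}"
    and cl: "\<forall>c\<in>C. \<forall>d\<in>C. (c - d) \<union> (d - c) \<in> C"
    and so: "\<And>c d. c \<in> C \<Longrightarrow> d \<in> C \<Longrightarrow> even (card (c \<inter> d))"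
  shows "(\<Sum>c\<in>C. \<i>^card c * (-1)^card (v \<inter> c)) =
    (if \<forall>c\<in>C. \<i>^card c * (-1::complex)^card (v \<inter> c) = 1 then of_nat (card C) else 0)"
proof (rule char_sum[OF fC cl])
  fix c d assume c: "c \<in> C" and d: "d \<in> C"
  have fc: "finite c" "finite d" using c d CI finite_subset by auto
  show "\<i>^card ((c - d) \<union> (d - c)) * (-1)^card (v \<inter> ((c - d) \<union> (d - c))) =
      \<i>^card c * (-1)^card (v \<inter> c) * (\<i>^card d * (-1::complex)^card (v \<inter> d))"
    unfolding ii_mult[OF fc so[OF c d]] neg1_mult[OF fc] by (simp only: mult_ac)
qed

lemma half_lemma:
  assumes "N \<ge> 1"
  shows "(1/2^N) * of_nat (2^(N-1)) * (1 - (-1::complex)^e) = (if odd e then 1 else 0)"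
proof -
  have "(2::complex)^N = 2 * 2^(N-1)" using assms by (metis Suc_diff_1 less_le_trans power_Suc zero_less_one)
  thus ?thesis by (simp add: minus_one_power_iff)
qed

lemma kappa:
  fixes n :: nat
  assumes n: "n = 2 * N" and N1: "N \<ge> 1" and vI: "v \<subseteq> {..<n}"
    and phi: "\<i>^card {..<n} * (-1::complex)^card (v \<inter> {..<n}) = 1"
  shows "(1/2^N) * of_nat (2^(N-1)) * (1 - \<i>^N * (-\<i>)^card v) =
     (if (card v \<le> N \<and> (N - card v) mod 4 = 2) \<or> (N \<le> card v \<and> (card v - N) mod 4 = 2) then 1 else 0)"
proof -
  have "\<i>^card {..<n} = (-1::complex)^N" unfolding n card_lessThan power_mult by simp
  moreover have "v \<inter> {..<n} = v" using vI by auto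
  ultimately have "(-1::complex)^(N + card v) = 1" using phi by (simp add: power_add)
  hence ev: "even (N + card v)" by (simp add: minus_one_power_iff split: if_splits)
  have ii: "\<i> * (-\<i>) = 1" by simp
  show ?thesis
  proof (cases "card v \<le> N")
    case True
    then obtain e where e: "N - card v = 2 * e" using ev by (metis dvd_def even_diff_nat le_add_diff_inverse2 even_add)
    have "\<i>^N * (-\<i>)^card v = \<i>^(N - card v) * (\<i> * (-\<i>))^card v"
      using True by (metis le_add_diff_inverse2 mult.assoc power_add power_mult_distrib)
    also have "\<dots> = (-1)^e" unfolding ii e power_mult by simp
    finally have z: "\<i>^N * (-\<i>)^card v = (-1)^e" .
    have "(card v \<le> N \<and> (N - card v) mod 4 = 2) \<or> (N \<le> card v \<and> (card v - N) mod 4 = 2) \<longleftrightarrow> odd e"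
      using True e by (cases "card v = N") (auto, presburger+)
    thus ?thesis unfolding z half_lemma[OF N1] by simp
  next
    case False
    then obtain e where e: "card v - N = 2 * e" using ev by (metis dvd_def even_diff_nat add.commute less_imp_le_nat not_le le_add_diff_inverse2 even_add)
    have "\<i>^N * (-\<i>)^card v = (\<i> * (-\<i>))^N * (-\<i>)^(card v - N)"
      using False by (metis le_add_diff_inverse nat_le_linear mult.assoc power_add power_mult_distrib)
    also have "\<dots> = (-1)^e" unfolding ii e power_mult by simp
    finally have z: "\<i>^N * (-\<i>)^card v = (-1)^e" .
    have "(card v \<le> N \<and> (N - card v) mod 4 = 2) \<or> (N \<le> card v \<and> (card v - N) mod 4 = 2) \<longleftrightarrow> odd e"
      using False e by auto presburger+
    thus ?thesis unfolding z half_lemma[OF N1] by simp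
  qed
qed



lemma Phi_V:
  fixes n :: nat and C :: "nat set set" and a b :: complex
  assumes ev_n: "even n" and n4: "n \<ge> 4" and ssd: "semi_self_dual n C"
  defines "N \<equiv> n div 2" and "s \<equiv> complex_of_real (sqrt 2)"
  defines "V \<equiv> {v \<in> Pow {..<n}. (\<forall>c\<in>C. \<i>^card c * (-1::complex)^card (v \<inter> c) = 1) \<and>
     ((card v \<le> N \<and> (N - card v) mod 4 = 2) \<or> (N \<le> card v \<and> (card v - N) mod 4 = 2))}"
  shows "weight_enum n C ((a+b)/s) (\<i>*(a-b)/s) -
      weight_enum n C (((a+b)/s + \<i>*(a-b)/s)/s) (((a+b)/s - \<i>*(a-b)/s)/s) =
     (\<Sum>v\<in>V. a^(n - card v) * b^card v)"
proof -
  have bl: "binary_linear_code n C" and sub: "C \<subseteq> dual_code n C" and II: "{..<n} \<in> C"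
    using ssd unfolding semi_self_dual_def by auto
  have CI: "C \<subseteq> Pow {..<n}" and e: "{} \<in> C" and cl: "\<forall>a\<in>C. \<forall>b\<in>C. (a - b) \<union> (b - a) \<in> C"
    using bl unfolding binary_linear_code_def by auto
  have so: "even (card (c \<inter> d))" if "c \<in> C" "d \<in> C" for c d
    using sub that unfolding dual_code_def by auto
  have evc: "even (card c)" if "c \<in> C" for c using so[OF that that] by simp
  have cardC: "card C = 2^(N-1)" and fC: "finite C" using card_code[OF ev_n ssd] unfolding N_def by auto
  have n: "n = 2 * N" using ev_n unfolding N_def by simp
  have N1: "N \<ge> 1" using n4 n by simp
  define \<chi> where "\<chi> v = (\<Sum>c\<in>C. \<i>^card c * (-1::complex)^card (v \<inter> c))" for v
  define X where "X (v::nat set) = a^(n - card v) * b^card v" for v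
  have "weight_enum n C ((a+b)/s) (\<i>*(a-b)/s) -
      weight_enum n C (((a+b)/s + \<i>*(a-b)/s)/s) (((a+b)/s - \<i>*(a-b)/s)/s) =
     (1/2^N) * (\<Sum>v\<in>Pow {..<n}. X v * \<chi> v) - (\<i>^N/2^N) * (\<Sum>v\<in>Pow {..<n}. X v * (-\<i>)^card v * \<chi> v)"
    unfolding s_def \<chi>_def X_def using WL[OF CI fC n] WTL[OF CI fC n evc] by simp
  also have "\<dots> = (\<Sum>v\<in>Pow {..<n}. X v * ((1/2^N) * \<chi> v * (1 - \<i>^N * (-\<i>)^card v)))"
    by (simp add: sum_distrib_left sum_subtractf[symmetric] algebra_simps)
  also have "\<dots> = (\<Sum>v\<in>Pow {..<n}. X v * (if v \<in> V then 1 else 0))"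
  proof (rule sum.cong[OF refl])
    fix v assume vI: "v \<in> Pow {..<n}"
    have ch: "\<chi> v = (if \<forall>c\<in>C. \<i>^card c * (-1::complex)^card (v \<inter> c) = 1 then of_nat (card C) else 0)"
      unfolding \<chi>_def by (rule chi_eval[OF fC CI cl so])
    show "X v * ((1/2^N) * \<chi> v * (1 - \<i>^N * (-\<i>)^card v)) = X v * (if v \<in> V then 1 else 0)"
    proof (cases "\<forall>c\<in>C. \<i>^card c * (-1::complex)^card (v \<inter> c) = 1")
      case True
      have "\<i>^card {..<n} * (-1::complex)^card (v \<inter> {..<n}) = 1" using True II by blast
      from kappa[OF n N1 _ this] vI True show ?thesis
        unfolding ch cardC V_def by auto
    next
      case False
      then show ?thesis unfolding ch V_def by auto
    qed
  qed
  also have "\<dots> = (\<Sum>v\<in>V. X v)"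
  proof -
    have "V \<subseteq> Pow {..<n}" unfolding V_def by auto
    hence "Pow {..<n} \<inter> V = V" by auto
    thus ?thesis using sum.inter_restrict[of "Pow {..<n}" X V] by (simp add: if_distrib cong: if_cong)
  qed
  finally show ?thesis unfolding X_def .
qed



lemma pair_term:
  fixes a b :: complex and hh :: "nat \<Rightarrow> nat \<Rightarrow> nat"
  assumes hh: "\<And>l. (\<forall>i>l. hh l i = 0) \<and> (\<forall>r t. fst (HK l r t) = (\<Sum>i\<le>l. of_nat (hh l i) * r ^ (l - i) * t ^ i))"
    and n: "n = 2 * N" and w: "w \<le> N" "(N - w) mod 4 = 2" and m: "m = (N - 2) div 4"
  shows "a^(n - w) * b^w + a^w * b^(n - w) =
     (a^4+b^4) * (\<Sum>i\<le>m. of_nat (hh ((N - w) div 4) i) * (a*b)^(N - 2 - 4*i) * (a^4-b^4)^(2*i))"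
proof -
  define l where "l = (N - w) div 4"
  have Nw: "N - w = 4 * l + 2" using w(2) div_mult_mod_eq[of "N - w" 4] unfolding l_def by simp
  have lm: "l \<le> m"
  proof -
    have "4 * l \<le> N - 2" using Nw by simp
    hence "(4 * l) div 4 \<le> (N - 2) div 4" by (rule div_le_mono)
    thus ?thesis unfolding m by simp
  qed
  have e1: "n - w = w + 4 * (2 * l + 1)" using Nw n w by simp
  have "a^(n - w) * b^w + a^w * b^(n - w) = (a*b)^w * ((a^4)^(2*l+1) + (b^4)^(2*l+1))"
  proof -
    have pa: "a^(n - w) = a^w * (a^4)^(2*l+1)" unfolding e1 by (simp only: power_add power_mult)
    have pb: "b^(n - w) = b^w * (b^4)^(2*l+1)" unfolding e1 by (simp only: power_add power_mult)
    show ?thesis unfolding pa pb power_mult_distrib by (simp only: distrib_left mult_ac)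
  qed
  also have "(a^4)^(2*l+1) + (b^4)^(2*l+1) = (a^4+b^4) * fst (HK l (a^4*b^4) ((a^4-b^4)^2))"
    using HK_id[of "a^4" "b^4" l] by simp
  also have "fst (HK l (a^4*b^4) ((a^4-b^4)^2)) = (\<Sum>i\<le>l. of_nat (hh l i) * (a^4*b^4) ^ (l - i) * ((a^4-b^4)^2) ^ i)"
    using hh by blast
  also have "(a*b)^w * ((a^4+b^4) * (\<Sum>i\<le>l. of_nat (hh l i) * (a^4*b^4) ^ (l - i) * ((a^4-b^4)^2) ^ i)) =
     (a^4+b^4) * (\<Sum>i\<le>l. of_nat (hh l i) * (a*b)^(N - 2 - 4*i) * (a^4-b^4)^(2*i))"
  proof -
    have "(a*b)^w * (of_nat (hh l i) * (a^4*b^4) ^ (l - i) * ((a^4-b^4)^2) ^ i) =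
        of_nat (hh l i) * (a*b)^(N - 2 - 4*i) * (a^4-b^4)^(2*i)" if "i \<le> l" for i
    proof -
      have "N - 2 - 4*i = w + 4 * (l - i)" using Nw that by simp
      hence q1: "(a*b)^(N - 2 - 4*i) = (a*b)^w * (a^4*b^4)^(l - i)"
        by (simp only: power_add power_mult power_mult_distrib)
      have q2: "((a^4-b^4)^2) ^ i = (a^4-b^4)^(2*i)" by (simp only: power_mult)
      show ?thesis unfolding q1 q2 by (simp only: mult_ac)
    qed
    hence per: "\<And>i. i \<in> {..l} \<Longrightarrow> (a*b)^w * (of_nat (hh l i) * (a^4*b^4) ^ (l - i) * ((a^4-b^4)^2) ^ i) =
        of_nat (hh l i) * (a*b)^(N - 2 - 4*i) * (a^4-b^4)^(2*i)" by simp
    have "(a*b)^w * ((a^4+b^4) * (\<Sum>i\<le>l. of_nat (hh l i) * (a^4*b^4) ^ (l - i) * ((a^4-b^4)^2) ^ i)) =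
       (a^4+b^4) * (\<Sum>i\<le>l. (a*b)^w * (of_nat (hh l i) * (a^4*b^4) ^ (l - i) * ((a^4-b^4)^2) ^ i))"
      by (simp only: sum_distrib_left mult.left_commute)
    also have "\<dots> = (a^4+b^4) * (\<Sum>i\<le>l. of_nat (hh l i) * (a*b)^(N - 2 - 4*i) * (a^4-b^4)^(2*i))"
      by (rule arg_cong[where f="\<lambda>z. (a^4+b^4) * z"], rule sum.cong[OF refl per])
    finally show ?thesis .
  qed
  also have "(\<Sum>i\<le>l. of_nat (hh l i) * (a*b)^(N - 2 - 4*i) * (a^4-b^4)^(2*i)) =
       (\<Sum>i\<le>m. of_nat (hh l i) * (a*b)^(N - 2 - 4*i) * (a^4-b^4)^(2*i))"
    by (rule sum.mono_neutral_left) (use lm hh in auto)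
  finally show ?thesis unfolding l_def .
qed



lemma comp_in_V:
  fixes n N :: nat and C :: "nat set set"
  assumes n: "n = 2 * N" and CI: "C \<subseteq> Pow {..<n}" and evc: "\<And>c. c \<in> C \<Longrightarrow> even (card c)"
    and v: "v \<subseteq> {..<n}" and phi: "\<forall>c\<in>C. \<i>^card c * (-1::complex)^card (v \<inter> c) = 1"
    and cond: "(card v \<le> N \<and> (N - card v) mod 4 = 2) \<or> (N \<le> card v \<and> (card v - N) mod 4 = 2)"
  shows "\<forall>c\<in>C. \<i>^card c * (-1::complex)^card (({..<n} - v) \<inter> c) = 1"
    and "card ({..<n} - v) = n - card v"
    and "(card ({..<n} - v) \<le> N \<and> (N - card ({..<n} - v)) mod 4 = 2) \<or> (N \<le> card ({..<n} - v) \<and> (card ({..<n} - v) - N) mod 4 = 2)"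
proof -
  show cc: "card ({..<n} - v) = n - card v" using v by (simp add: card_Diff_subset finite_subset)
  have vn: "card v \<le> n" using v by (metis card_lessThan card_mono finite_lessThan)
  show "(card ({..<n} - v) \<le> N \<and> (N - card ({..<n} - v)) mod 4 = 2) \<or> (N \<le> card ({..<n} - v) \<and> (card ({..<n} - v) - N) mod 4 = 2)"
    unfolding cc using cond vn n by auto
  show "\<forall>c\<in>C. \<i>^card c * (-1::complex)^card (({..<n} - v) \<inter> c) = 1"
  proof
    fix c assume c: "c \<in> C"
    have cI: "c \<subseteq> {..<n}" using c CI by auto
    hence fc: "finite c" using finite_subset by auto
    have eq: "({..<n} - v) \<inter> c = c - (v \<inter> c)" using cI by auto
    have k: "card (({..<n} - v) \<inter> c) = card c - card (v \<inter> c)"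
      unfolding eq using fc by (simp add: card_Diff_subset)
    have le: "card (v \<inter> c) \<le> card c" using fc by (simp add: card_mono)
    have "(-1::complex)^card (({..<n} - v) \<inter> c) = (-1)^card (v \<inter> c)"
      unfolding k using evc[OF c] le by (simp add: minus_one_power_iff)
    thus "\<i>^card c * (-1::complex)^card (({..<n} - v) \<inter> c) = 1" using phi c by simp
  qed
qed

lemma Phi_form:
  fixes n :: nat and C :: "nat set set"
  assumes ev_n: "even n" and n4: "n \<ge> 4" and ssd: "semi_self_dual n C"
  defines "N \<equiv> n div 2" and "s \<equiv> complex_of_real (sqrt 2)"
  defines "m \<equiv> (N - 2) div 4"
  shows "\<exists>f::nat\<Rightarrow>nat. \<forall>a b. weight_enum n C ((a+b)/s) (\<i>*(a-b)/s) -
      weight_enum n C (((a+b)/s + \<i>*(a-b)/s)/s) (((a+b)/s - \<i>*(a-b)/s)/s) =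
     (a^4+b^4) * (\<Sum>i\<le>m. of_nat (f i) * (a*b)^(N - 2 - 4*i) * (a^4-b^4)^(2*i))"
proof -
  have bl: "binary_linear_code n C" and sub: "C \<subseteq> dual_code n C"
    using ssd unfolding semi_self_dual_def by auto
  have CI: "C \<subseteq> Pow {..<n}"
    using bl unfolding binary_linear_code_def by auto
  have so: "even (card (c \<inter> d))" if "c \<in> C" "d \<in> C" for c d
    using sub that unfolding dual_code_def by auto
  have evc: "even (card c)" if "c \<in> C" for c using so[OF that that] by simp
  have n: "n = 2 * N" using ev_n unfolding N_def by simp
  have "\<forall>l. \<exists>h. (\<forall>i>l. h i = 0) \<and> (\<forall>r t. fst (HK l r t) = (\<Sum>i\<le>l. of_nat (h i) * r ^ (l - i) * t ^ i))"
    using good_HK unfolding good_def by blast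
  then obtain hh where hh: "\<And>l. (\<forall>i>l. hh l i = 0) \<and> (\<forall>r t. fst (HK l r t) = (\<Sum>i\<le>l. of_nat (hh l i) * r ^ (l - i) * t ^ i))"
    by metis
  define V where "V = {v \<in> Pow {..<n}. (\<forall>c\<in>C. \<i>^card c * (-1::complex)^card (v \<inter> c) = 1) \<and>
     ((card v \<le> N \<and> (N - card v) mod 4 = 2) \<or> (N \<le> card v \<and> (card v - N) mod 4 = 2))}"
  define V1 where "V1 = {v \<in> V. card v \<le> N}"
  define comp where "comp v = {..<n} - v" for v :: "nat set"
  define f where "f i = (\<Sum>v\<in>V1. hh ((N - card v) div 4) i)" for i
  have fV: "finite V" unfolding V_def by auto
  have V1V: "V1 \<subseteq> V" unfolding V1_def by auto
  have cV: "comp v \<in> V" "card (comp v) = n - card v" if "v \<in> V" for v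
  proof -
    have v: "v \<subseteq> {..<n}" and phi: "\<forall>c\<in>C. \<i>^card c * (-1::complex)^card (v \<inter> c) = 1"
      and cond: "(card v \<le> N \<and> (N - card v) mod 4 = 2) \<or> (N \<le> card v \<and> (card v - N) mod 4 = 2)"
      using that unfolding V_def by auto
    note r = comp_in_V[OF n CI evc v phi cond]
    show "comp v \<in> V" unfolding V_def comp_def using r by auto
    show "card (comp v) = n - card v" unfolding comp_def using r by auto
  qed
  have vI: "v \<subseteq> {..<n}" if "v \<in> V" for v using that unfolding V_def by auto
  have vn: "card v \<le> n" if "v \<in> V" for v using vI[OF that] by (metis card_lessThan card_mono finite_lessThan)
  have V1c: "(N - card v) mod 4 = 2" "card v < N" if "v \<in> V1" for v
  proof -
    have "card v \<le> N" and "(card v \<le> N \<and> (N - card v) mod 4 = 2) \<or> (N \<le> card v \<and> (card v - N) mod 4 = 2)"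
      using that unfolding V1_def V_def by auto
    thus "(N - card v) mod 4 = 2" "card v < N" by (auto simp: le_antisym)
  qed
  have cc: "comp (comp v) = v" if "v \<in> V" for v using vI[OF that] unfolding comp_def by auto
  have img: "comp ` V1 = V - V1"
  proof
    show "comp ` V1 \<subseteq> V - V1"
    proof
      fix x assume "x \<in> comp ` V1"
      then obtain v where v: "v \<in> V1" "x = comp v" by auto
      have "v \<in> V" using v V1V by auto
      thus "x \<in> V - V1" using cV[of v] V1c[OF v(1)] v n unfolding V1_def by auto
    qed
    show "V - V1 \<subseteq> comp ` V1"
    proof
      fix w assume w: "w \<in> V - V1"
      hence wV: "w \<in> V" and wN: "card w > N" unfolding V1_def by auto
      have "comp w \<in> V1" using cV[OF wV] wN n vn[OF wV] unfolding V1_def by auto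
      moreover have "w = comp (comp w)" using cc[OF wV] by simp
      ultimately show "w \<in> comp ` V1" by blast
    qed
  qed
  have inj: "inj_on comp V1"
    by (rule inj_on_inverseI[where g=comp]) (use cc V1V in auto)
  show ?thesis
  proof (intro exI allI)
    fix a b :: complex
    define X where "X v = a^(n - card v) * b^card v" for v :: "nat set"
    have "weight_enum n C ((a+b)/s) (\<i>*(a-b)/s) -
      weight_enum n C (((a+b)/s + \<i>*(a-b)/s)/s) (((a+b)/s - \<i>*(a-b)/s)/s) = (\<Sum>v\<in>V. X v)"
      unfolding V_def X_def N_def s_def by (rule Phi_V[OF ev_n n4 ssd])
    also have "\<dots> = (\<Sum>v\<in>V - V1. X v) + (\<Sum>v\<in>V1. X v)"
      by (rule sum.subset_diff[OF V1V fV])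
    also have "(\<Sum>v\<in>V - V1. X v) = (\<Sum>v\<in>V1. X (comp v))"
      unfolding img[symmetric] using sum.reindex[OF inj, of X] by simp
    also have "(\<Sum>v\<in>V1. X (comp v)) + (\<Sum>v\<in>V1. X v) = (\<Sum>v\<in>V1. X v + X (comp v))"
      by (simp add: sum.distrib)
    also have "\<dots> = (\<Sum>v\<in>V1. (a^4+b^4) * (\<Sum>i\<le>m. of_nat (hh ((N - card v) div 4) i) * (a*b)^(N - 2 - 4*i) * (a^4-b^4)^(2*i)))"
    proof (rule sum.cong[OF refl])
      fix v assume v: "v \<in> V1"
      hence vV: "v \<in> V" using V1V by auto
      have "X v + X (comp v) = a^(n - card v) * b^card v + a^card v * b^(n - card v)"
        unfolding X_def cV(2)[OF vV] using vn[OF vV] by simp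
      also have "\<dots> = (a^4+b^4) * (\<Sum>i\<le>m. of_nat (hh ((N - card v) div 4) i) * (a*b)^(N - 2 - 4*i) * (a^4-b^4)^(2*i))"
        by (rule pair_term[OF hh n _ V1c(1)[OF v] meta_eq_to_obj_eq[OF m_def]]) (use V1c(2)[OF v] in simp)
      finally show "X v + X (comp v) = (a^4+b^4) * (\<Sum>i\<le>m. of_nat (hh ((N - card v) div 4) i) * (a*b)^(N - 2 - 4*i) * (a^4-b^4)^(2*i))" .
    qed
    also have "\<dots> = (a^4+b^4) * (\<Sum>i\<le>m. of_nat (f i) * (a*b)^(N - 2 - 4*i) * (a^4-b^4)^(2*i))"
      unfolding f_def of_nat_sum sum_distrib_left sum_distrib_right
      by (subst sum.swap) (simp only: mult_ac)
    finally show "weight_enum n C ((a+b)/s) (\<i>*(a-b)/s) -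
      weight_enum n C (((a+b)/s + \<i>*(a-b)/s)/s) (((a+b)/s - \<i>*(a-b)/s)/s) =
     (a^4+b^4) * (\<Sum>i\<le>m. of_nat (f i) * (a*b)^(N - 2 - 4*i) * (a^4-b^4)^(2*i))" .
  qed
qed



lemma Qid: fixes a b :: complex shows "((a+b)^2/2)^2 - 6 * ((a+b)^2/2) * (-((a-b)^2)/2) + (-((a-b)^2)/2)^2 = 2 * (a^4+b^4)"
  by (simp add: field_simps power2_eq_square power4_eq_xxxx)
lemma pid: fixes a b :: complex shows "(a+b)^2/2 + -((a-b)^2)/2 = 2 * (a*b)"
  by (simp add: field_simps power2_eq_square)
lemma gid: fixes a b :: complex shows "(a+b)^2/2 * (-((a-b)^2)/2) * ((a+b)^2/2 - -((a-b)^2)/2)^2 = -((a^4-b^4)^2)/4"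
  by (simp add: field_simps power2_eq_square power4_eq_xxxx)
lemma fin_id: fixes A P W :: complex shows "2 * A * ((2 * P)^k * (-(W^2)/4)^i) = ((-1)^i * (2^(k+1) / 4^i)) * (A * P^k * W^(2*i))"
proof -
    have 0: "-(W^2)/4 = (-1) * (W^2/4)" by simp
    have 1: "(-(W^2)/4)^i = (-1)^i * (W^(2*i) / 4^i)"
      unfolding 0 power_mult_distrib power_divide power_mult ..
    have 2: "(2 * P)^k = 2^k * P^k" by (rule power_mult_distrib)
    have 3: "(2::complex)^(k+1) = 2^k * 2" by simp
    show ?thesis unfolding 1 2 3 by (simp only: times_divide_eq_left times_divide_eq_right mult_ac)
qed


lemma basis_L:
  fixes a b :: complex
  assumes i: "4 * i \<le> N - 2" and N2: "N \<ge> 2"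
  defines "s \<equiv> complex_of_real (sqrt 2)"
  defines "x \<equiv> (a+b)/s" and "y \<equiv> \<i>*(a-b)/s"
  shows "(x^4 - 6 * x^2 * y^2 + y^4) * ((x^2 + y^2) ^ (N - 2 - 4 * i) * (x^2 * y^2 * (x^2 - y^2)^2) ^ i) =
    ((-1)^i * (2::complex) powi (int N - 1 - 6 * int i)) * ((a^4+b^4) * (a*b)^(N - 2 - 4*i) * (a^4-b^4)^(2*i))"
proof -
  have ss: "s * s = 2" unfolding s_def by (rule s_sq)
  have s0: "s \<noteq> 0" using ss by auto
  have x2: "x^2 = (a+b)^2/2" unfolding x_def power_divide power2_eq_square[of s] ss ..
  have y2: "y^2 = -((a-b)^2)/2" unfolding y_def power_divide power2_eq_square[of s] ss
    by (simp add: power_mult_distrib)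
  have x4: "x^4 = (x^2)^2" and y4: "y^4 = (y^2)^2" by (simp_all flip: power_mult)
  have Q: "x^4 - 6 * x^2 * y^2 + y^4 = 2 * (a^4+b^4)"
    unfolding x4 y4 x2 y2 by (rule Qid)
  have p: "x^2 + y^2 = 2 * (a*b)"
    unfolding x2 y2 by (rule pid)
  have g: "x^2 * y^2 * (x^2 - y^2)^2 = -((a^4-b^4)^2)/4"
    unfolding x2 y2 by (rule gid)
  define k where "k = N - 2 - 4 * i"
  have kk: "int N - 1 - 6 * int i = int (k + 1) + (- int (2 * i))" unfolding k_def using i N2 by simp
  have c: "(2::complex) powi (int N - 1 - 6 * int i) = 2^(k+1) / 4^i"
  proof -
    have "(2::complex) powi (int N - 1 - 6 * int i) = 2 powi (int (k + 1)) * 2 powi (- int (2 * i))"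
      unfolding kk by (rule power_int_add) simp
    also have "\<dots> = 2^(k+1) / 2^(2*i)"
      by (simp only: power_int_minus power_int_of_nat divide_inverse)
    also have "(2::complex)^(2*i) = 4^i" by (simp add: power_mult)
    finally show ?thesis .
  qed
  have "(x^4 - 6 * x^2 * y^2 + y^4) * ((x^2 + y^2) ^ k * (x^2 * y^2 * (x^2 - y^2)^2) ^ i) =
     2 * (a^4+b^4) * ((2 * (a*b))^k * (-((a^4-b^4)^2)/4)^i)"
    unfolding Q p g ..
  also have "\<dots> = ((-1)^i * (2^(k+1) / 4^i)) * ((a^4+b^4) * (a*b)^k * (a^4-b^4)^(2*i))"
    by (rule fin_id)
  finally show ?thesis unfolding c k_def .
qed



lemma u_inj: "inj (\<lambda>k::nat. (of_nat k)^2 / of_nat (Suc k) :: complex)"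
proof (rule injI)
  fix k k' :: nat
  assume "(of_nat k)^2 / of_nat (Suc k) = ((of_nat k')^2 / of_nat (Suc k') :: complex)"
  hence "(of_nat k)^2 * of_nat (Suc k') = ((of_nat k')^2 * of_nat (Suc k) :: complex)"
    by (simp add: frac_eq_eq del: of_nat_Suc)
  hence "of_nat (k^2 * Suc k') = (of_nat (k'^2 * Suc k) :: complex)" by (simp add: algebra_simps)
  hence e: "k^2 * Suc k' = k'^2 * Suc k" using of_nat_eq_iff by blast
  have "(int k - int k') * (int k * int k' + int k + int k') = int (k^2 * Suc k') - int (k'^2 * Suc k)"
    by (simp add: algebra_simps power2_eq_square)
  also have "\<dots> = 0" using e by simp
  finally have "int k = int k' \<or> int k * int k' + int k + int k' = 0" by simp
  thus "k = k'"
  proof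
    assume h: "int k * int k' + int k + int k' = 0"
    have "0 \<le> int k * int k'" by simp
    hence "int k = 0 \<and> int k' = 0" using h by linarith
    thus "k = k'" by simp
  qed simp
qed

lemma uniq:
  fixes d :: "nat \<Rightarrow> complex"
  assumes m: "4 * m \<le> N - 2"
    and H: "\<And>a b::complex. (a^4+b^4) * (\<Sum>i\<le>m. d i * (a*b)^(N - 2 - 4*i) * (a^4-b^4)^(2*i)) = 0"
  shows "\<forall>i\<le>m. d i = 0"
proof (rule ccontr)
  assume "\<not> (\<forall>i\<le>m. d i = 0)"
  then obtain j where j: "j \<le> m" "d j \<noteq> 0" by auto
  define u where "u k = ((of_nat k)^2 / of_nat (Suc k) :: complex)" for k
  have root: "(\<Sum>i\<le>m. d i * u k ^ i) = 0" for k
  proof -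
    define q where "q = (of_nat (Suc k) :: complex)"
    define a where "a = complex_of_real (root 4 (real (Suc k)))"
    have q0: "q \<noteq> 0" unfolding q_def by (subst of_nat_eq_0_iff) simp
    have a4: "a^4 = q" unfolding a_def q_def by (simp flip: of_real_power)
    have a0: "a \<noteq> 0" using a4 q0 by auto
    have q1: "q + 1 \<noteq> 0"
    proof -
      have "q + 1 = of_nat (Suc (Suc k))" unfolding q_def by simp
      moreover have "(of_nat (Suc (Suc k)) :: complex) \<noteq> 0" by (subst of_nat_eq_0_iff) simp
      ultimately show ?thesis by metis
    qed
    have qm1: "q - 1 = of_nat k" unfolding q_def by simp
    have "(a^4+1^4) * (\<Sum>i\<le>m. d i * (a*1)^(N - 2 - 4*i) * (a^4-1^4)^(2*i)) = 0" by (rule H)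
    hence s1: "(\<Sum>i\<le>m. d i * a^(N - 2 - 4*i) * (of_nat k)^(2*i)) = 0"
      using q1 unfolding a4 qm1[symmetric] by simp
    have "(\<Sum>i\<le>m. d i * a^(N - 2 - 4*i) * (of_nat k)^(2*i)) =
        (\<Sum>i\<le>m. a^(N - 2 - 4*m) * q^m * (d i * u k ^ i))"
    proof (rule sum.cong[OF refl])
      fix i assume "i \<in> {..m}"
      hence i: "i \<le> m" by simp
      have "N - 2 - 4*i = (N - 2 - 4*m) + 4 * (m - i)" using i m by simp
      hence "a^(N - 2 - 4*i) = a^(N - 2 - 4*m) * q^(m - i)"
        by (simp add: power_add power_mult a4)
      moreover have "q^m = q^(m-i) * q^i" using i by (simp flip: power_add)
      moreover have "u k ^ i = (of_nat k)^(2*i) / q^i" unfolding u_def q_def by (simp add: power_divide power_mult)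
      ultimately show "d i * a^(N - 2 - 4*i) * (of_nat k)^(2*i) = a^(N - 2 - 4*m) * q^m * (d i * u k ^ i)"
        using q0 by (simp add: field_simps)
    qed
    also have "\<dots> = a^(N - 2 - 4*m) * q^m * (\<Sum>i\<le>m. d i * u k ^ i)" by (simp add: sum_distrib_left)
    finally show ?thesis using s1 a0 q0 by simp
  qed
  have "finite {z. (\<Sum>i\<le>m. d i * z^i) = 0}" by (rule polyfun_roots_finite[of d j m, OF j(2) j(1)])
  moreover have "range u \<subseteq> {z. (\<Sum>i\<le>m. d i * z^i) = 0}" using root by auto
  ultimately have "finite (range u)" by (rule finite_subset[rotated])
  hence "finite (UNIV :: nat set)" using u_inj unfolding u_def by (rule finite_imageD)
  thus False by simp
qed



lemma L_inv:
  fixes s x y :: complex assumes ss: "s * s = 2"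
  shows "((x - \<i>*y)/s + (x + \<i>*y)/s)/s = x" "\<i>*((x - \<i>*y)/s - (x + \<i>*y)/s)/s = y"
proof -
  have "((x - \<i>*y)/s + (x + \<i>*y)/s)/s = ((x - \<i>*y) + (x + \<i>*y))/(s*s)"
    by (simp only: add_divide_distrib[symmetric] divide_divide_eq_left)
  also have "\<dots> = x" unfolding ss by simp
  finally show "((x - \<i>*y)/s + (x + \<i>*y)/s)/s = x" .
  have "\<i>*((x - \<i>*y)/s - (x + \<i>*y)/s)/s = \<i>*((x - \<i>*y) - (x + \<i>*y))/(s*s)"
    by (simp only: diff_divide_distrib[symmetric] divide_divide_eq_left times_divide_eq_right)
  also have "\<dots> = y" unfolding ss by (simp add: algebra_simps)
  finally show "\<i>*((x - \<i>*y)/s - (x + \<i>*y)/s)/s = y" .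
qed

theorem corollary5p1:
  fixes n :: nat and C :: "nat set set"
  assumes "even n" and "n \<ge> 4"
    and "semi_self_dual n C" and "\<not> doubly_even C"
  defines "N \<equiv> n div 2"
    and "A \<equiv> weight_enum n C"
  defines "D \<equiv> (\<lambda>x y. A ((x + y) / complex_of_real (sqrt 2)) ((x - y) / complex_of_real (sqrt 2)))"
    and "m \<equiv> (N - 2) div 4"
  defines "B \<equiv> (\<lambda>x y. A x y - D x y)"
  defines "P \<equiv> (\<lambda>e::nat \<Rightarrow> complex. (\<forall>i>m. e i = 0) \<and>
       (\<forall>x y. B x y = (x^4 - 6 * x^2 * y^2 + y^4) *
          (\<Sum>i\<le>m. e i * (x^2 + y^2) ^ (N - 2 - 4 * i) * (x^2 * y^2 * (x^2 - y^2)^2) ^ i)))"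
  shows "(\<exists>!e. P e) \<and>
    (\<forall>e. P e \<longrightarrow> (\<forall>i\<le>m. \<exists>k::nat.
        (-1) ^ i * (2::complex) powi (int N - 1 - 6 * int i) * e i = of_nat k))"
proof -
  have n: "n = 2*N" using assms(1) unfolding N_def by simp
  have N2: "N \<ge> 2" using assms(2) n by simp
  have m4: "4*m \<le> N - 2" unfolding m_def using div_mult_mod_eq[of "N-2" 4] by linarith
  define s where "s = complex_of_real (sqrt 2)"
  have ss: "s * s = 2" unfolding s_def by (rule s_sq)
  define c where "c i = (-1)^i * (2::complex) powi (int N - 1 - 6 * int i)" for i :: nat
  have c0: "c i \<noteq> 0" for i unfolding c_def by simp
  define Y where "Y a b i = (a*b)^(N - 2 - 4*i) * (a^4-b^4)^(2*i)" for a b :: complex and i :: nat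
  define R where "R e x y = (x^4 - 6 * x^2 * y^2 + y^4) *
          (\<Sum>i\<le>m. e i * (x^2 + y^2) ^ (N - 2 - 4 * i) * (x^2 * y^2 * (x^2 - y^2)^2) ^ i)"
    for e :: "nat \<Rightarrow> complex" and x y :: complex
  have "\<exists>f::nat\<Rightarrow>nat. \<forall>a b. B ((a+b)/s) (\<i>*(a-b)/s) =
     (a^4+b^4) * (\<Sum>i\<le>m. of_nat (f i) * (a*b)^(N - 2 - 4*i) * (a^4-b^4)^(2*i))"
    unfolding B_def D_def A_def s_def N_def m_def by (rule Phi_form[OF assms(1-3)])
  then obtain f :: "nat \<Rightarrow> nat" where F: "\<And>a b. B ((a+b)/s) (\<i>*(a-b)/s) = (a^4+b^4) * (\<Sum>i\<le>m. of_nat (f i) * Y a b i)"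
    unfolding Y_def by (auto simp: mult.assoc)
  have RL: "R e ((a+b)/s) (\<i>*(a-b)/s) = (a^4+b^4) * (\<Sum>i\<le>m. (c i * e i) * Y a b i)" for e a b
  proof -
    have bas: "((((a+b)/s))^4 - 6 * ((a+b)/s)^2 * (\<i>*(a-b)/s)^2 + (\<i>*(a-b)/s)^4) *
        ((((a+b)/s)^2 + (\<i>*(a-b)/s)^2) ^ (N - 2 - 4 * i) * (((a+b)/s)^2 * (\<i>*(a-b)/s)^2 * (((a+b)/s)^2 - (\<i>*(a-b)/s)^2)^2) ^ i) =
        c i * ((a^4+b^4) * Y a b i)" if "i \<le> m" for i
    proof -
      have "4 * i \<le> N - 2" using that m4 by simp
      from basis_L[OF this N2, of a b] show ?thesis
        unfolding c_def Y_def s_def by (simp only: mult.assoc)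
    qed
    have "R e ((a+b)/s) (\<i>*(a-b)/s) = (\<Sum>i\<le>m. e i * ((((a+b)/s))^4 - 6 * ((a+b)/s)^2 * (\<i>*(a-b)/s)^2 + (\<i>*(a-b)/s)^4) *
        ((((a+b)/s)^2 + (\<i>*(a-b)/s)^2) ^ (N - 2 - 4 * i) * (((a+b)/s)^2 * (\<i>*(a-b)/s)^2 * (((a+b)/s)^2 - (\<i>*(a-b)/s)^2)^2) ^ i))"
      unfolding R_def sum_distrib_left by (rule sum.cong[OF refl]) (simp only: mult_ac)
    also have "\<dots> = (\<Sum>i\<le>m. e i * (c i * ((a^4+b^4) * Y a b i)))"
      apply (rule sum.cong[OF refl])
      subgoal for i by (subst mult.assoc[of "e i"]) (simp only: bas atMost_iff)
      done
    also have "\<dots> = (a^4+b^4) * (\<Sum>i\<le>m. (c i * e i) * Y a b i)"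
      unfolding sum_distrib_left by (rule sum.cong[OF refl]) (simp only: mult_ac)
    finally show ?thesis .
  qed
  have key: "\<forall>i\<le>m. c i * e i = of_nat (f i)" if Pe: "P e" for e
  proof -
    have Be: "\<And>x y. B x y = R e x y" using Pe unfolding P_def R_def by blast
    have "(a^4+b^4) * (\<Sum>i\<le>m. (c i * e i - of_nat (f i)) * (a*b)^(N - 2 - 4*i) * (a^4-b^4)^(2*i)) = 0" for a b
    proof -
      have "(a^4+b^4) * (\<Sum>i\<le>m. (c i * e i - of_nat (f i)) * (a*b)^(N - 2 - 4*i) * (a^4-b^4)^(2*i)) =
          (a^4+b^4) * (\<Sum>i\<le>m. (c i * e i) * Y a b i) - (a^4+b^4) * (\<Sum>i\<le>m. of_nat (f i) * Y a b i)"
        unfolding Y_def right_diff_distrib[symmetric] sum_subtractf[symmetric]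
        by (rule arg_cong[where f="\<lambda>z. (a^4+b^4) * z"], rule sum.cong[OF refl]) (simp add: algebra_simps)
      also have "\<dots> = 0" using RL[of e a b] F[of a b] Be[of "(a+b)/s" "\<i>*(a-b)/s"] by simp
      finally show ?thesis .
    qed
    from uniq[OF m4 this] show ?thesis by simp
  qed
  define e0 where "e0 i = (if i \<le> m then of_nat (f i) / c i else 0)" for i
  have ce0: "c i * e0 i = of_nat (f i)" if "i \<le> m" for i using that c0[of i] unfolding e0_def by simp
  have Pe0: "P e0"
    unfolding P_def
  proof (intro conjI allI impI)
    show "e0 i = 0" if "i > m" for i using that unfolding e0_def by simp
    fix x y :: complex
    define a where "a = (x - \<i>*y)/s"
    define b where "b = (x + \<i>*y)/s"
    have hx: "(a+b)/s = x" and hy: "\<i>*(a-b)/s = y" unfolding a_def b_def by (rule L_inv[OF ss])+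
    have "B ((a+b)/s) (\<i>*(a-b)/s) = R e0 ((a+b)/s) (\<i>*(a-b)/s)"
      unfolding F RL by (rule arg_cong[where f="\<lambda>z. (a^4+b^4) * z"], rule sum.cong[OF refl]) (simp add: ce0)
    thus "B x y = (x^4 - 6 * x^2 * y^2 + y^4) *
          (\<Sum>i\<le>m. e0 i * (x^2 + y^2) ^ (N - 2 - 4 * i) * (x^2 * y^2 * (x^2 - y^2)^2) ^ i)"
      unfolding hx hy R_def .
  qed
  have uniqe: "e = e0" if "P e" for e
  proof
    fix i show "e i = e0 i"
    proof (cases "i \<le> m")
      case True
      have "c i * e i = of_nat (f i)" using key[OF that] True by blast
      thus ?thesis using True c0[of i] unfolding e0_def by (simp add: field_simps)
    next
      case False
      then show ?thesis using that unfolding P_def e0_def by simp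
    qed
  qed
  show ?thesis
  proof
    show "\<exists>!e. P e" using Pe0 uniqe by blast
    show "\<forall>e. P e \<longrightarrow> (\<forall>i\<le>m. \<exists>k::nat. (-1) ^ i * (2::complex) powi (int N - 1 - 6 * int i) * e i = of_nat k)"
      using key unfolding c_def by blast
  qed
qed



end
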